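(* Let $G$ be a group with generating set $S$ not containing the identity. Then every color-preserving automorphism of the Cayley color digraph of $G$ with respect to $S$ is an isometry of $G$ with respect to the cardinal metric $d_C$.
   Context: The cardinal norm is $\|x\| = \min\{|A| : A\subseteq S,\ x\in\langle A\rangle\}$, where $\langle A\rangle$ is the subgroup generated by $A$, and $d_C(g,h)=\|g^{-1}h\|$. The Cayley color digraph has vertex set $G$ and, for each $x\in G$ and $c\in S$, an arc $(x,xc)$ of color $c$. A color-preserving automorphism is a digraph automorphism $\alpha$ (bijection of $G$ with $(x,y)$ an arc iff $(\alpha(x),\alpha(y))$ is an arc) such that $(x,y)$ has color $c$ iff $(\alpha(x),\alpha(y))$ has color $c$. *)

theory Defs
  imports "HOL-Algebra.Generated_Groups"
begin

definition cardinal_norm :: "('a, 'b) monoid_scheme \<Rightarrow> 'a set \<Rightarrow> 'a \<Rightarrow> nat" where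
  "cardinal_norm G S x = (LEAST n. \<exists>A. A \<subseteq> S \<and> finite A \<and> card A = n \<and> x \<in> generate G A)"

definition cardinal_dist :: "('a, 'b) monoid_scheme \<Rightarrow> 'a set \<Rightarrow> 'a \<Rightarrow> 'a \<Rightarrow> nat" where
  "cardinal_dist G S g h = cardinal_norm G S (inv\<^bsub>G\<^esub> g \<otimes>\<^bsub>G\<^esub> h)"

definition cayley_arc :: "('a, 'b) monoid_scheme \<Rightarrow> 'a set \<Rightarrow> 'a \<Rightarrow> 'a \<Rightarrow> 'a \<Rightarrow> bool" where
  "cayley_arc G S c x y \<longleftrightarrow> x \<in> carrier G \<and> c \<in> S \<and> y = x \<otimes>\<^bsub>G\<^esub> c"

definition color_preserving_aut :: "('a, 'b) monoid_scheme \<Rightarrow> 'a set \<Rightarrow> ('a \<Rightarrow> 'a) \<Rightarrow> bool" where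
  "color_preserving_aut G S \<alpha> \<longleftrightarrow>
     bij_betw \<alpha> (carrier G) (carrier G) \<and>
     (\<forall>x\<in>carrier G. \<forall>y\<in>carrier G.
        ((\<exists>c. cayley_arc G S c x y) \<longleftrightarrow> (\<exists>c. cayley_arc G S c (\<alpha> x) (\<alpha> y))) \<and>
        (\<forall>c. cayley_arc G S c x y \<longleftrightarrow> cayley_arc G S c (\<alpha> x) (\<alpha> y)))"

definition is_isometry :: "('a, 'b) monoid_scheme \<Rightarrow> 'a set \<Rightarrow> ('a \<Rightarrow> 'a) \<Rightarrow> bool" where
  "is_isometry G S \<alpha> \<longleftrightarrow>
     (\<forall>g\<in>carrier G. \<forall>h\<in>carrier G. cardinal_dist G S (\<alpha> g) (\<alpha> h) = cardinal_dist G S g h)"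

end

theory Submission
  imports Defs
begin

lemma (in group) helper:
  assumes "group G"
    and "S \<subseteq> carrier G"
    and "generate G S = carrier G"
    and "\<one>\<^bsub>G\<^esub> \<notin> S"
    and "color_preserving_aut G S \<alpha>"
  shows "is_isometry G S \<alpha>"
proof -
  have bij: "bij_betw \<alpha> (carrier G) (carrier G)" and
    arc: "\<And>x y c. x \<in> carrier G \<Longrightarrow> y \<in> carrier G \<Longrightarrow>
           cayley_arc G S c x y \<longleftrightarrow> cayley_arc G S c (\<alpha> x) (\<alpha> y)"
    using assms(5) unfolding color_preserving_aut_def by auto
  have ac: "\<alpha> x \<in> carrier G" if "x \<in> carrier G" for x
    using bij that bij_betw_apply by fast
  have s1: "\<alpha> (x \<otimes> c) = \<alpha> x \<otimes> c" if "x \<in> carrier G" "c \<in> S" for x c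
  proof -
    have cc: "c \<in> carrier G" using that assms(2) by auto
    have "cayley_arc G S c x (x \<otimes> c)" using that unfolding cayley_arc_def by auto
    then have "cayley_arc G S c (\<alpha> x) (\<alpha> (x \<otimes> c))" using arc that cc by auto
    then show ?thesis unfolding cayley_arc_def by auto
  qed
  have s2: "\<alpha> (x \<otimes> inv c) = \<alpha> x \<otimes> inv c" if "x \<in> carrier G" "c \<in> S" for x c
  proof -
    have cc: "c \<in> carrier G" using that assms(2) by auto
    define y where "y = x \<otimes> inv c"
    have yc: "y \<in> carrier G" using that cc y_def by auto
    have "y \<otimes> c = x" using y_def that cc by (simp add: m_assoc)
    then have "\<alpha> x = \<alpha> y \<otimes> c" using s1[OF yc that(2)] by simp
    then have "\<alpha> x \<otimes> inv c = \<alpha> y" using ac[OF yc] cc by (simp add: m_assoc)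
    then show ?thesis using y_def by simp
  qed
  have gen: "\<forall>x\<in>carrier G. \<alpha> (x \<otimes> g) = \<alpha> x \<otimes> g" if "g \<in> generate G S" for g
    using that
  proof induction
    case one
    then show ?case using ac by simp
  next
    case (incl h)
    then show ?case using s1 by auto
  next
    case (inv h)
    then show ?case using s2 by auto
  next
    case (eng h1 h2)
    have c1: "h1 \<in> carrier G" and c2: "h2 \<in> carrier G"
      using eng.hyps assms(3) by auto
    show ?case
    proof
      fix x assume x: "x \<in> carrier G"
      have "\<alpha> (x \<otimes> (h1 \<otimes> h2)) = \<alpha> ((x \<otimes> h1) \<otimes> h2)" using x c1 c2 by (simp add: m_assoc)
      also have "\<dots> = \<alpha> (x \<otimes> h1) \<otimes> h2" using eng.IH(2) x c1 by auto
      also have "\<dots> = \<alpha> x \<otimes> h1 \<otimes> h2" using eng.IH(1) x by auto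
      also have "\<dots> = \<alpha> x \<otimes> (h1 \<otimes> h2)" using ac[OF x] c1 c2 by (simp add: m_assoc)
      finally show "\<alpha> (x \<otimes> (h1 \<otimes> h2)) = \<alpha> x \<otimes> (h1 \<otimes> h2)" .
    qed
  qed
  have key: "\<alpha> g = \<alpha> \<one> \<otimes> g" if "g \<in> carrier G" for g
  proof -
    have "\<alpha> (\<one> \<otimes> g) = \<alpha> \<one> \<otimes> g" 
    proof -
      have "g \<in> generate G S" using that assms(3) by simp
      from gen[OF this] show ?thesis by (rule bspec) simp
    qed
    then show ?thesis using that by simp
  qed
  show ?thesis unfolding is_isometry_def cardinal_dist_def
  proof (intro ballI)
    fix g h assume g: "g \<in> carrier G" and h: "h \<in> carrier G"
    have a1: "\<alpha> \<one> \<in> carrier G" using ac by simp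
    have "inv (\<alpha> g) \<otimes> \<alpha> h = inv g \<otimes> inv (\<alpha> \<one>) \<otimes> (\<alpha> \<one> \<otimes> h)"
      using key[OF g] key[OF h] g h a1 by (simp add: inv_mult_group del: one_closed)
    also have "\<dots> = inv g \<otimes> h" using a1 g h by (simp add: m_assoc inv_solve_left')
    finally show "cardinal_norm G S (inv (\<alpha> g) \<otimes> \<alpha> h) = cardinal_norm G S (inv g \<otimes> h)" by simp
  qed
qed

theorem mainTheorem10:
  fixes G :: "('a, 'b) monoid_scheme" and S :: "'a set" and \<alpha> :: "'a \<Rightarrow> 'a"
  assumes "group G"
    and "S \<subseteq> carrier G"
    and "generate G S = carrier G"
    and "\<one>\<^bsub>G\<^esub> \<notin> S"
    and "color_preserving_aut G S \<alpha>"
  shows "is_isometry G S \<alpha>"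
  using group.helper[OF assms(1) assms] .

end
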